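(* There is an absolute constant $C>0$ such that for every power $q$ of an odd prime, every $d\ge 2$, and every $A\subset\mathbb{F}_q^d$ with $|A|\ge C q^{\frac{d+2}{3}}$, there exist $x,y,z\in A$ such that $(x,y,z)$ forms a right angle.
   Context: For $u,v\in\mathbb{F}_q^d$, $u\cdot v=\sum_{i=1}^d u_iv_i$. An ordered triple $(x,y,z)\in(\mathbb{F}_q^d)^3$ forms a right angle if $x,y,z$ are pairwise distinct and $(x-y)\cdot(z-y)=0$. *)

theory Defs
  imports Complex_Main "HOL-Algebra.Ring" "HOL-Library.FuncSet" "HOL-Computational_Algebra.Primes"
begin

definition vecs :: "('a, 'b) ring_scheme \<Rightarrow> nat \<Rightarrow> (nat \<Rightarrow> 'a) set" where
  "vecs R d = ({0..<d} \<rightarrow>\<^sub>E carrier R)"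

definition vdiff :: "('a, 'b) ring_scheme \<Rightarrow> nat \<Rightarrow> (nat \<Rightarrow> 'a) \<Rightarrow> (nat \<Rightarrow> 'a) \<Rightarrow> (nat \<Rightarrow> 'a)" where
  "vdiff R d u v = (\<lambda>i\<in>{0..<d}. u i \<ominus>\<^bsub>R\<^esub> v i)"

definition vdot :: "('a, 'b) ring_scheme \<Rightarrow> nat \<Rightarrow> (nat \<Rightarrow> 'a) \<Rightarrow> (nat \<Rightarrow> 'a) \<Rightarrow> 'a" where
  "vdot R d u v = (\<Oplus>\<^bsub>R\<^esub> i\<in>{0..<d}. u i \<otimes>\<^bsub>R\<^esub> v i)"

definition right_angle :: "('a, 'b) ring_scheme \<Rightarrow> nat \<Rightarrow> (nat \<Rightarrow> 'a) \<Rightarrow> (nat \<Rightarrow> 'a) \<Rightarrow> (nat \<Rightarrow> 'a) \<Rightarrow> bool" where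
  "right_angle R d x y z \<longleftrightarrow> x \<noteq> y \<and> y \<noteq> z \<and> x \<noteq> z \<and>
     vdot R d (vdiff R d x y) (vdiff R d z y) = \<zero>\<^bsub>R\<^esub>"

end

theory Submission
  imports Defs
begin

lemma (in cring) vdot_closed: "u \<in> vecs R d \<Longrightarrow> v \<in> vecs R d \<Longrightarrow> vdot R d u v \<in> carrier R"
  unfolding vdot_def vecs_def by (intro finsum_closed) (auto simp: PiE_def Pi_def)

lemma (in cring) vdiff_in: "x \<in> vecs R d \<Longrightarrow> y \<in> vecs R d \<Longrightarrow> vdiff R d x y \<in> vecs R d"
  unfolding vdiff_def vecs_def by (auto simp: PiE_def Pi_def)

lemma (in cring) ident1: "a \<in> carrier R \<Longrightarrow> b \<in> carrier R \<Longrightarrow> c \<in> carrier R \<Longrightarrow> a \<otimes> b = a \<otimes> (b \<ominus> c) \<oplus> a \<otimes> c"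
  by algebra

lemma (in cring) vdot_split:
  assumes "u \<in> vecs R d" "z \<in> vecs R d" "y \<in> vecs R d"
  shows "vdot R d u z = vdot R d u (vdiff R d z y) \<oplus> vdot R d u y"
proof -
  have c: "\<And>i. i \<in> {0..<d} \<Longrightarrow> u i \<in> carrier R \<and> z i \<in> carrier R \<and> y i \<in> carrier R"
    using assms unfolding vecs_def by auto
  have "vdot R d u z = (\<Oplus>i\<in>{0..<d}. u i \<otimes> (z i \<ominus> y i) \<oplus> u i \<otimes> y i)"
    unfolding vdot_def
    by (intro finsum_cong) (auto simp: c Pi_def ident1)
  also have "\<dots> = (\<Oplus>i\<in>{0..<d}. u i \<otimes> (z i \<ominus> y i)) \<oplus> (\<Oplus>i\<in>{0..<d}. u i \<otimes> y i)"
    by (intro finsum_addf) (auto simp: c Pi_def)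
  also have "(\<Oplus>i\<in>{0..<d}. u i \<otimes> (z i \<ominus> y i)) = vdot R d u (vdiff R d z y)"
    unfolding vdot_def vdiff_def by (intro finsum_cong) (auto simp: c Pi_def)
  finally show ?thesis unfolding vdot_def .
qed

lemma (in cring) vdot_zero_iff:
  assumes "u \<in> vecs R d" "z \<in> vecs R d" "y \<in> vecs R d"
  shows "vdot R d u (vdiff R d z y) = \<zero> \<longleftrightarrow> vdot R d u z = vdot R d u y"
proof -
  have cl: "vdot R d u (vdiff R d z y) \<in> carrier R" "vdot R d u y \<in> carrier R"
    using assms vdot_closed vdiff_in by auto
  show ?thesis using vdot_split[OF assms] cl
    by (simp add: add.r_cancel_one)
qed

lemma (in cring) vdot_comm:
  assumes "u \<in> vecs R d" "v \<in> vecs R d"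
  shows "vdot R d u v = vdot R d v u"
proof -
  have "\<And>i. i < d \<Longrightarrow> u i \<in> carrier R \<and> v i \<in> carrier R" using assms by (auto simp: vecs_def)
  then show ?thesis unfolding vdot_def by (intro finsum_cong) (auto simp: m_comm Pi_def)
qed

lemma vecs_finite: "finite (carrier R) \<Longrightarrow> finite (vecs R d)"
  unfolding vecs_def by (intro finite_PiE) auto

lemma vecs_card: "finite (carrier R) \<Longrightarrow> card (vecs R d) = card (carrier R) ^ d"
  unfolding vecs_def by (simp add: card_PiE)

lemma (in field) t1:
  assumes "a \<in> carrier R" "a \<noteq> \<zero>" shows "a \<in> Units R"
  using assms by (simp add: field_Units)

lemma (in field) t2:
  assumes "a \<in> Units R" "b \<in> carrier R" shows "inv a \<otimes> b \<in> carrier R"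
  using assms by simp

lemma (in field) t3:
  assumes "a \<in> Units R" "b \<in> carrier R" shows "a \<otimes> (inv a \<otimes> b) = b"
    using assms by (metis Units_closed Units_inv_closed Units_r_inv l_one m_assoc)

lemma (in cring) t4:
  assumes "c \<in> carrier R" "c' \<in> carrier R" shows "c \<oplus> (c' \<ominus> c) = c'"
  using assms by algebra

lemma (in cring) shiftV:
  assumes "z \<in> vecs R d" "t \<in> carrier R"
  shows "(\<lambda>j\<in>{0..<d}. if j = i then z j \<oplus> t else z j) \<in> vecs R d"
  unfolding vecs_def using assms unfolding vecs_def
  by (intro restrict_PiE_iff[THEN iffD2]) (auto simp: PiE_iff)

lemma (in cring) shift_dot:
  assumes v: "v \<in> vecs R d" and z: "z \<in> vecs R d" and tc: "t \<in> carrier R" and i: "i < d"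
  shows "vdot R d v (\<lambda>j\<in>{0..<d}. if j = i then z j \<oplus> t else z j) = vdot R d v z \<oplus> v i \<otimes> t"
proof -
  have vc: "\<And>j. j < d \<Longrightarrow> v j \<in> carrier R" using v by (auto simp: vecs_def)
  have zc: "\<And>j. j < d \<Longrightarrow> z j \<in> carrier R" using z by (auto simp: vecs_def)
  have pt: "v j \<otimes> (\<lambda>j\<in>{0..<d}. if j = i then z j \<oplus> t else z j) j = v j \<otimes> z j \<oplus> (if i = j then v j \<otimes> t else \<zero>)"
    if j: "j \<in> {0..<d}" for j
    using j vc zc tc by (cases "i = j") (auto simp: r_distr)
  have "vdot R d v (\<lambda>j\<in>{0..<d}. if j = i then z j \<oplus> t else z j) = (\<Oplus>j\<in>{0..<d}. v j \<otimes> z j \<oplus> (if i = j then v j \<otimes> t else \<zero>))"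
    unfolding vdot_def by (rule finsum_cong'[OF refl _ pt]) (auto simp: Pi_def vc zc tc)
  also have "\<dots> = vdot R d v z \<oplus> (\<Oplus>j\<in>{0..<d}. (if i = j then v j \<otimes> t else \<zero>))"
    unfolding vdot_def by (intro finsum_addf) (auto simp: Pi_def vc zc tc)
  also have "(\<Oplus>j\<in>{0..<d}. (if i = j then v j \<otimes> t else \<zero>)) = v i \<otimes> t"
    using i by (intro finsum_singleton) (auto simp: Pi_def vc tc)
  finally show ?thesis .
qed

lemma (in cring) shift_inj:
  assumes tc: "t \<in> carrier R"
  shows "inj_on (\<lambda>z. (\<lambda>j\<in>{0..<d}. if j = i then z j \<oplus> t else z j)) (vecs R d)"
proof (rule inj_onI)
  fix z z' assume z: "z \<in> vecs R d" and z': "z' \<in> vecs R d"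
    and e: "(\<lambda>j\<in>{0..<d}. if j = i then z j \<oplus> t else z j) = (\<lambda>j\<in>{0..<d}. if j = i then z' j \<oplus> t else z' j)"
  show "z = z'"
  proof
    fix j
    show "z j = z' j"
    proof (cases "j < d")
      case True
      have zc: "z j \<in> carrier R" "z' j \<in> carrier R" using z z' True by (auto simp: vecs_def)
      have "(if j = i then z j \<oplus> t else z j) = (if j = i then z' j \<oplus> t else z' j)"
        using fun_cong[OF e, of j] True by simp
      then show ?thesis using zc tc by (cases "j = i") (auto simp: add.right_cancel)
    next
      case False then show ?thesis using z z' unfolding vecs_def by (auto simp: PiE_def extensional_def)
    qed
  qed
qed

lemma (in field) fiber_le:
  assumes v: "v \<in> vecs R d" and i: "i < d" and vi: "v i \<noteq> \<zero>" and c: "c \<in> carrier R" "c' \<in> carrier R"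
    and fin: "finite (carrier R)"
  shows "card {z \<in> vecs R d. vdot R d v z = c} \<le> card {z \<in> vecs R d. vdot R d v z = c'}"
proof -
  have vic: "v i \<in> carrier R" using v i by (auto simp: vecs_def)
  have U: "v i \<in> Units R" using t1[OF vic vi] .
  define t where "t = inv (v i) \<otimes> (c' \<ominus> c)"
  have dc: "c' \<ominus> c \<in> carrier R" using c by simp
  have tc: "t \<in> carrier R" unfolding t_def using t2[OF U dc] .
  have vt: "v i \<otimes> t = c' \<ominus> c" unfolding t_def using t3[OF U dc] .
  have cc: "c \<oplus> (c' \<ominus> c) = c'" using t4[OF c] .
  let ?\<phi> = "\<lambda>z. (\<lambda>j\<in>{0..<d}. if j = i then z j \<oplus> t else z j)"
  have img: "?\<phi> ` {z \<in> vecs R d. vdot R d v z = c} \<subseteq> {z \<in> vecs R d. vdot R d v z = c'}"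
  proof
    fix w assume "w \<in> ?\<phi> ` {z \<in> vecs R d. vdot R d v z = c}"
    then obtain z where z: "z \<in> vecs R d" "vdot R d v z = c" and w: "w = ?\<phi> z" by blast
    have "vdot R d v w = c'" unfolding w using shift_dot[OF v z(1) tc i] z(2) vt cc by simp
    moreover have "w \<in> vecs R d" unfolding w using shiftV[OF z(1) tc] .
    ultimately show "w \<in> {z \<in> vecs R d. vdot R d v z = c'}" by simp
  qed
  have fB: "finite {z \<in> vecs R d. vdot R d v z = c'}" using vecs_finite[OF fin, of d] by simp
  show ?thesis
    by (rule card_inj_on_le[OF inj_on_subset[OF shift_inj[OF tc]] img fB]) auto
qed

lemma (in field) fiber_card:
  assumes v: "v \<in> vecs R d" and i: "i < d" and vi: "v i \<noteq> \<zero>" and c: "c \<in> carrier R"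
    and fin: "finite (carrier R)"
  shows "card {z \<in> vecs R d. vdot R d v z = c} = card (carrier R) ^ (d - 1)"
proof -
  define k where "k = card {z \<in> vecs R d. vdot R d v z = \<zero>}"
  have eq: "card {z \<in> vecs R d. vdot R d v z = c'} = k" if "c' \<in> carrier R" for c'
    using fiber_le[OF v i vi that zero_closed fin] fiber_le[OF v i vi zero_closed that fin] unfolding k_def by simp
  have im: "vdot R d v ` vecs R d \<subseteq> carrier R" using v by (auto intro: vdot_closed)
  have "card (vecs R d) = (\<Sum>c'\<in>carrier R. card {z \<in> vecs R d. vdot R d v z = c'})"
    using sum.group[OF vecs_finite[OF fin, where d=d] fin, where g="vdot R d v" and h="\<lambda>_. 1::nat"] im
    by simp
  also have "\<dots> = (\<Sum>c'\<in>carrier R. k)" by (rule sum.cong[OF refl eq])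
  also have "\<dots> = card (carrier R) * k" by simp
  finally have e1: "card (carrier R) ^ d = card (carrier R) * k" by (simp add: vecs_card fin)
  have e2: "card (carrier R) ^ d = card (carrier R) * card (carrier R) ^ (d - 1)"
    using i by (metis Suc_pred' gr_zeroI not_less_zero power_Suc)
  have "card (carrier R) > 0" using fin by (auto simp: card_gt_0_iff)
  then have "k = card (carrier R) ^ (d - 1)" using e1 e2 by simp
  then show ?thesis using eq[OF c] by simp
qed

lemma (in cring) t5: "a \<in> carrier R \<Longrightarrow> b \<in> carrier R \<Longrightarrow> (a \<ominus> b) \<oplus> b = a"
  by algebra

lemma (in cring) minus_zero_eq: "a \<in> carrier R \<Longrightarrow> b \<in> carrier R \<Longrightarrow> a \<ominus> b = \<zero> \<Longrightarrow> a = b"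
  by (metis t5 l_zero)

lemma (in cring) t6: "a \<in> carrier R \<Longrightarrow> b \<in> carrier R \<Longrightarrow> (a \<ominus> a) \<otimes> b = \<zero>"
  by algebra

lemma vecs_ext: "x \<in> vecs R d \<Longrightarrow> y \<in> vecs R d \<Longrightarrow> (\<And>i. i < d \<Longrightarrow> x i = y i) \<Longrightarrow> x = y"
  unfolding vecs_def by (rule PiE_ext) auto

lemma (in cring) vdiff_cancel:
  assumes "x1 \<in> vecs R d" "x2 \<in> vecs R d" "y \<in> vecs R d" "vdiff R d x1 y = vdiff R d x2 y"
  shows "x1 = x2"
proof (rule vecs_ext[OF assms(1,2)])
  fix i assume i: "i < d"
  have c: "x1 i \<in> carrier R" "x2 i \<in> carrier R" "y i \<in> carrier R" using assms(1-3) i by (auto simp: vecs_def)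
  have "x1 i \<ominus> y i = x2 i \<ominus> y i" using fun_cong[OF assms(4), of i] i by (simp add: vdiff_def)
  then show "x1 i = x2 i" using c t5 by metis
qed

lemma (in cring) vdiff_nonzero:
  assumes "x \<in> vecs R d" "y \<in> vecs R d" "x \<noteq> y"
  shows "\<exists>i<d. vdiff R d x y i \<noteq> \<zero>"
proof (rule ccontr)
  assume "\<not> ?thesis"
  then have "\<And>i. i < d \<Longrightarrow> x i \<ominus> y i = \<zero>" by (auto simp: vdiff_def)
  moreover have "\<And>i. i < d \<Longrightarrow> x i \<in> carrier R \<and> y i \<in> carrier R" using assms(1,2) by (auto simp: vecs_def)
  ultimately have "\<And>i. i < d \<Longrightarrow> x i = y i" using minus_zero_eq by blast
  then show False using vecs_ext[OF assms(1,2)] assms(3) by blast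
qed

lemma (in field) K_lower:
  assumes fin: "finite (carrier R)" and x: "x \<in> vecs R d" and y: "y \<in> vecs R d"
  shows "card (carrier R) ^ (d - 1) \<le> card {z \<in> vecs R d. vdot R d (vdiff R d x y) z = vdot R d (vdiff R d x y) y}"
proof (cases "x = y")
  case False
  then obtain i where i: "i < d" "vdiff R d x y i \<noteq> \<zero>" using vdiff_nonzero[OF x y] by blast
  show ?thesis using fiber_card[OF vdiff_in[OF x y] i vdot_closed[OF vdiff_in[OF x y] y] fin] by simp
next
  case True
  have z: "vdot R d (vdiff R d x y) z = \<zero>" if "z \<in> vecs R d" for z
  proof -
    have yz: "\<And>i. i<d \<Longrightarrow> y i \<in> carrier R \<and> z i \<in> carrier R" using that y by (auto simp: vecs_def)
    have "vdot R d (vdiff R d x y) z = (\<Oplus>i\<in>{0..<d}. \<zero>)"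
      unfolding vdot_def vdiff_def using that True y yz
      by (intro finsum_cong') (auto simp: Pi_def t6)
    then show ?thesis by simp
  qed
  have "{z \<in> vecs R d. vdot R d (vdiff R d x y) z = vdot R d (vdiff R d x y) y} = vecs R d"
    using z y by auto
  moreover have "card (carrier R) ^ (d - 1) \<le> card (carrier R) ^ d"
  proof (cases "card (carrier R) = 0")
    case False then show ?thesis by (intro power_increasing) auto
  qed (use zero_closed fin in auto)
  ultimately show ?thesis by (simp add: vecs_card fin)
qed

lemma (in field) N_card:
  assumes fin: "finite (carrier R)" and z: "z \<in> vecs R d" and z': "z' \<in> vecs R d"
  shows "card {v \<in> vecs R d. vdot R d v z = vdot R d v z'} =
     (if z = z' then card (carrier R) ^ d else card (carrier R) ^ (d - 1))"
proof (cases "z = z'")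
  case True then show ?thesis by (simp add: vecs_card fin)
next
  case False
  then obtain i where i: "i < d" "vdiff R d z z' i \<noteq> \<zero>" using vdiff_nonzero[OF z z'] by blast
  have "{v \<in> vecs R d. vdot R d v z = vdot R d v z'} = {v \<in> vecs R d. vdot R d (vdiff R d z z') v = \<zero>}"
    using vdot_zero_iff[OF _ z z'] vdot_comm[OF _ vdiff_in[OF z z']] by auto
  then show ?thesis using False fiber_card[OF vdiff_in[OF z z'] i zero_closed fin] by simp
qed

lemma sum_ind: "finite S \<Longrightarrow> (\<Sum>z\<in>S. if P z then (1::real) else 0) = real (card {z\<in>S. P z})"
  by (subst sum.inter_filter[symmetric]) auto

lemma CS_real:
  fixes f g :: "'a \<Rightarrow> real"
  shows "(\<Sum>i\<in>I. f i * g i)\<^sup>2 \<le> (\<Sum>i\<in>I. (f i)\<^sup>2) * (\<Sum>i\<in>I. (g i)\<^sup>2)"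
proof -
  have "0 \<le> (\<Sum>i\<in>I. \<Sum>j\<in>I. (f i * g j - f j * g i)\<^sup>2)" by (intro sum_nonneg) auto
  also have "\<dots> = (\<Sum>i\<in>I. \<Sum>j\<in>I. (f i)\<^sup>2 * (g j)\<^sup>2 + (f j)\<^sup>2 * (g i)\<^sup>2 - 2 * ((f i * g i) * (f j * g j)))"
    by (intro sum.cong refl) (simp add: power2_eq_square algebra_simps)
  also have "\<dots> = (\<Sum>i\<in>I. \<Sum>j\<in>I. (f i)\<^sup>2 * (g j)\<^sup>2) + (\<Sum>i\<in>I. \<Sum>j\<in>I. (f j)\<^sup>2 * (g i)\<^sup>2)
      - 2 * (\<Sum>i\<in>I. \<Sum>j\<in>I. (f i * g i) * (f j * g j))"
    by (simp add: sum.distrib sum_subtractf sum_distrib_left)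
  also have "(\<Sum>i\<in>I. \<Sum>j\<in>I. (f i)\<^sup>2 * (g j)\<^sup>2) = (\<Sum>i\<in>I. (f i)\<^sup>2) * (\<Sum>i\<in>I. (g i)\<^sup>2)"
    by (simp add: sum_product)
  also have "(\<Sum>i\<in>I. \<Sum>j\<in>I. (f j)\<^sup>2 * (g i)\<^sup>2) = (\<Sum>j\<in>I. \<Sum>i\<in>I. (f j)\<^sup>2 * (g i)\<^sup>2)"
    by (rule sum.swap)
  also have "\<dots> = (\<Sum>i\<in>I. (f i)\<^sup>2) * (\<Sum>i\<in>I. (g i)\<^sup>2)"
    by (simp add: sum_product)
  also have "(\<Sum>i\<in>I. \<Sum>j\<in>I. (f i * g i) * (f j * g j)) = (\<Sum>i\<in>I. f i * g i)\<^sup>2"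
    by (simp add: sum_product power2_eq_square)
  finally show ?thesis by simp
qed

lemma inner_c:
  fixes x y :: real
  assumes "finite C" "a \<in> C"
  shows "(\<Sum>c\<in>C. (x * (if a = c then 1 else 0)) * (y * (if b = c then 1 else 0))) = x * y * (if a = b then 1 else 0)"
proof -
  have "(\<Sum>c\<in>C. (x * (if a = c then 1 else 0)) * (y * (if b = c then 1 else 0)))
      = (\<Sum>c\<in>C. if a = c then x * y * (if b = c then 1 else 0) else 0)"
    by (intro sum.cong) auto
  also have "\<dots> = x * y * (if b = a then 1 else 0)" using assms by simp
  finally show ?thesis by auto
qed

lemma (in field) Dsum_bound:
  assumes fin: "finite (carrier R)" and d1: "1 \<le> d" and AV: "A \<subseteq> vecs R d"
  defines "\<alpha> \<equiv> real (card A) / real (card (carrier R)) ^ d"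
  defines "g \<equiv> (\<lambda>z. (if z \<in> A then 1 else 0) - \<alpha>)"
  defines "D \<equiv> (\<lambda>k. (\<Sum>z\<in>vecs R d. g z * (if vdot R d (fst k) z = snd k then 1 else 0)))"
  shows "(\<Sum>k\<in>vecs R d \<times> carrier R. (D k)\<^sup>2) \<le> real (card (carrier R)) ^ d * real (card A)"
proof -
  define V where "V = vecs R d"
  define C where "C = carrier R"
  define Q where "Q = real (card C) ^ d"
  define Q1 where "Q1 = real (card C) ^ (d - 1)"
  define ar where "ar = real (card A)"
  have finV: "finite V" unfolding V_def using vecs_finite[OF fin] .
  have finC: "finite C" unfolding C_def using fin .
  have finA: "finite A" using finite_subset[OF AV] finV unfolding V_def by blast
  have cardV: "real (card V) = Q" unfolding V_def Q_def C_def by (simp add: vecs_card fin)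
  have Cpos: "card C > 0" unfolding C_def using fin by (auto simp: card_gt_0_iff)
  have Qpos: "Q > 0" unfolding Q_def using Cpos by simp
  have QQ1: "Q1 \<le> Q"
    unfolding Q_def Q1_def using Cpos by (intro power_increasing) auto
  have sg0: "(\<Sum>z\<in>V. g z) = 0"
  proof -
    have "(\<Sum>z\<in>V. g z) = (\<Sum>z\<in>V. if z \<in> A then 1 else 0) - \<alpha> * real (card V)"
      unfolding g_def by (simp add: sum_subtractf)
    also have "(\<Sum>z\<in>V. if z \<in> A then 1 else (0::real)) = ar"
      using sum_ind[OF finV, of "\<lambda>z. z \<in> A"] AV unfolding V_def ar_def
      by (simp add: Int_absorb1 Collect_mem_eq inf_set_def[symmetric] Int_def[symmetric])
    finally show ?thesis using cardV Qpos Cpos unfolding \<alpha>_def ar_def Q_def C_def by simp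
  qed
  have sg2: "(\<Sum>z\<in>V. (g z)\<^sup>2) = ar - \<alpha> * ar"
  proof -
    have "(\<Sum>z\<in>V. (g z)\<^sup>2) = (\<Sum>z\<in>V. (1 - 2 * \<alpha>) * (if z \<in> A then 1 else 0) + \<alpha>\<^sup>2)"
      unfolding g_def by (intro sum.cong refl) (auto simp: power2_eq_square algebra_simps)
    also have "\<dots> = (1 - 2 * \<alpha>) * ar + \<alpha>\<^sup>2 * Q"
    proof -
      have "(\<Sum>z\<in>V. if z \<in> A then 1 else (0::real)) = ar"
        using sum_ind[OF finV, of "\<lambda>z. z \<in> A"] AV unfolding V_def ar_def
        by (simp add: Int_absorb1 Collect_mem_eq inf_set_def[symmetric] Int_def[symmetric])
      then show ?thesis using cardV by (simp add: sum.distrib sum_distrib_left[symmetric])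
    qed
    also have "\<alpha> * Q = ar" unfolding \<alpha>_def ar_def Q_def C_def using Qpos[unfolded Q_def C_def] by simp
    then have "(1 - 2 * \<alpha>) * ar + \<alpha>\<^sup>2 * Q = ar - \<alpha> * ar"
      by (simp add: power2_eq_square algebra_simps)
    finally show ?thesis .
  qed
  have inner: "(\<Sum>c\<in>C. (D (v,c))\<^sup>2) = (\<Sum>z\<in>V. \<Sum>z'\<in>V. g z * g z' * (if vdot R d v z = vdot R d v z' then 1 else 0))"
    if v: "v \<in> V" for v
  proof -
    let ?P = "\<lambda>z c. (if vdot R d v z = c then 1 else (0::real))"
    have "(\<Sum>c\<in>C. (D (v,c))\<^sup>2) = (\<Sum>c\<in>C. \<Sum>z\<in>V. \<Sum>z'\<in>V. (g z * ?P z c) * (g z' * ?P z' c))"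
      unfolding D_def V_def by (simp add: power2_eq_square sum_product)
    also have "\<dots> = (\<Sum>z\<in>V. \<Sum>c\<in>C. \<Sum>z'\<in>V. (g z * ?P z c) * (g z' * ?P z' c))"
      by (rule sum.swap)
    also have "\<dots> = (\<Sum>z\<in>V. \<Sum>z'\<in>V. \<Sum>c\<in>C. (g z * ?P z c) * (g z' * ?P z' c))"
      by (intro sum.cong refl sum.swap)
    also have "\<dots> = (\<Sum>z\<in>V. \<Sum>z'\<in>V. g z * g z' * (if vdot R d v z = vdot R d v z' then 1 else 0))"
    proof (intro sum.cong refl)
      fix z z' assume z: "z \<in> V" and z': "z' \<in> V"
      have "vdot R d v z \<in> C" using vdot_closed v z unfolding V_def C_def by blast
      then show "(\<Sum>c\<in>C. (g z * ?P z c) * (g z' * ?P z' c)) = g z * g z' * (if vdot R d v z = vdot R d v z' then 1 else 0)"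
        using inner_c[OF finC] by simp
    qed
    finally show ?thesis .
  qed
  have "(\<Sum>k\<in>V \<times> C. (D k)\<^sup>2) = (\<Sum>v\<in>V. \<Sum>c\<in>C. (D (v,c))\<^sup>2)"
    by (simp add: sum.cartesian_product)
  also have "\<dots> = (\<Sum>v\<in>V. \<Sum>z\<in>V. \<Sum>z'\<in>V. g z * g z' * (if vdot R d v z = vdot R d v z' then 1 else 0))"
    using inner by (intro sum.cong refl) auto
  also have "\<dots> = (\<Sum>z\<in>V. \<Sum>v\<in>V. \<Sum>z'\<in>V. g z * g z' * (if vdot R d v z = vdot R d v z' then 1 else 0))"
    by (rule sum.swap)
  also have "\<dots> = (\<Sum>z\<in>V. \<Sum>z'\<in>V. \<Sum>v\<in>V. g z * g z' * (if vdot R d v z = vdot R d v z' then 1 else 0))"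
    by (intro sum.cong refl sum.swap)
  also have "\<dots> = (\<Sum>z\<in>V. \<Sum>z'\<in>V. g z * g z' * (if z = z' then Q else Q1))"
  proof (intro sum.cong refl)
    fix z z' assume z: "z \<in> V" and z': "z' \<in> V"
    have "(\<Sum>v\<in>V. g z * g z' * (if vdot R d v z = vdot R d v z' then 1 else 0))
        = g z * g z' * real (card {v \<in> V. vdot R d v z = vdot R d v z'})"
      by (simp add: sum_distrib_left[symmetric] sum_ind[OF finV])
    also have "\<dots> = g z * g z' * (if z = z' then Q else Q1)"
      using N_card[OF fin, of z d z'] z z' unfolding V_def Q_def Q1_def C_def by simp
    finally show "(\<Sum>v\<in>V. g z * g z' * (if vdot R d v z = vdot R d v z' then 1 else 0)) = g z * g z' * (if z = z' then Q else Q1)" .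
  qed
  also have "\<dots> = (\<Sum>z\<in>V. Q1 * g z * (\<Sum>z'\<in>V. g z') + (Q - Q1) * (g z)\<^sup>2)"
  proof (intro sum.cong refl)
    fix z assume z: "z \<in> V"
    have "(\<Sum>z'\<in>V. g z * g z' * (if z = z' then Q else Q1))
        = (\<Sum>z'\<in>V. Q1 * g z * g z' + (if z = z' then (Q - Q1) * (g z * g z') else 0))"
      by (intro sum.cong refl) (auto simp: algebra_simps)
    also have "\<dots> = Q1 * g z * (\<Sum>z'\<in>V. g z') + (Q - Q1) * (g z)\<^sup>2"
      using z finV by (simp add: sum.distrib sum_distrib_left power2_eq_square)
    finally show "(\<Sum>z'\<in>V. g z * g z' * (if z = z' then Q else Q1)) = Q1 * g z * (\<Sum>z'\<in>V. g z') + (Q - Q1) * (g z)\<^sup>2" .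
  qed
  also have "\<dots> = (\<Sum>z\<in>V. Q1 * g z * (\<Sum>z'\<in>V. g z')) + (\<Sum>z\<in>V. (Q - Q1) * (g z)\<^sup>2)"
    by (rule sum.distrib)
  also have "\<dots> = Q1 * (\<Sum>z\<in>V. g z) * (\<Sum>z\<in>V. g z) + (Q - Q1) * (\<Sum>z\<in>V. (g z)\<^sup>2)"
    by (simp only: sum_distrib_right[symmetric] sum_distrib_left[symmetric])
  also have "\<dots> = (Q - Q1) * (ar - \<alpha> * ar)" using sg0 sg2 by simp
  finally have eq: "(\<Sum>k\<in>V \<times> C. (D k)\<^sup>2) = (Q - Q1) * (ar - \<alpha> * ar)" by simp
  have s0: "0 \<le> ar - \<alpha> * ar"
  proof -
    have "0 \<le> (\<Sum>z\<in>V. (g z)\<^sup>2)" by (intro sum_nonneg) auto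
    then show ?thesis using sg2 by simp
  qed
  have "0 \<le> \<alpha> * ar" unfolding \<alpha>_def ar_def by simp
  then have "(Q - Q1) * (ar - \<alpha> * ar) \<le> Q * ar"
  proof -
    have "0 \<le> Q1" unfolding Q1_def by simp
    then have "(Q - Q1) * (ar - \<alpha> * ar) \<le> Q * (ar - \<alpha> * ar)"
      using s0 by (intro mult_right_mono) auto
    also have "\<dots> \<le> Q * ar" using \<open>0 \<le> \<alpha> * ar\<close> Qpos by (intro mult_left_mono) auto
    finally show ?thesis .
  qed
  then show ?thesis using eq unfolding V_def C_def Q_def ar_def by simp
qed

lemma (in field) main_ineq:
  assumes fin: "finite (carrier R)" and d1: "1 \<le> d" and AV: "A \<subseteq> vecs R d"
    and noRA: "\<forall>x\<in>A. \<forall>y\<in>A. \<forall>z\<in>A. \<not> right_angle R d x y z"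
  shows "real (card A) ^ 3 / real (card (carrier R)) - 3 * real (card A) ^ 2 \<le> 0 \<or>
         (real (card A) ^ 3 / real (card (carrier R)) - 3 * real (card A) ^ 2)\<^sup>2
            \<le> 3 * real (card A) ^ 3 * real (card (carrier R)) ^ d"
proof -
  define V where "V = vecs R d"
  define C where "C = carrier R"
  define qr where "qr = real (card C)"
  define ar where "ar = real (card A)"
  define \<alpha> where "\<alpha> = real (card A) / real (card (carrier R)) ^ d"
  define g where "g = (\<lambda>z. (if z \<in> A then 1 else 0) - \<alpha>)"
  define D where "D = (\<lambda>k. (\<Sum>z\<in>vecs R d. g z * (if vdot R d (fst k) z = snd k then 1 else 0)))"
  define key where "key p = (vdiff R d (fst p) (snd p), vdot R d (vdiff R d (fst p) (snd p)) (snd p))" for p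
  define Tset where "Tset = Sigma (A \<times> A) (\<lambda>p. {z\<in>A. vdot R d (vdiff R d (fst p) (snd p)) (vdiff R d z (snd p)) = \<zero>})"
  define S where "S p = {z\<in>A. vdot R d (fst (key p)) z = snd (key p)}" for p
  define b where "b k = real (card {p \<in> A \<times> A. key p = k})" for k
  have finV: "finite V" unfolding V_def using vecs_finite[OF fin] .
  have finC: "finite C" unfolding C_def using fin .
  have finA: "finite A" using finite_subset[OF AV] finV unfolding V_def by blast
  have Cpos: "card C > 0" unfolding C_def using fin by (auto simp: card_gt_0_iff)
  have AV': "\<And>x. x \<in> A \<Longrightarrow> x \<in> V" using AV unfolding V_def by auto
  have S_eq: "{z\<in>A. vdot R d (vdiff R d (fst p) (snd p)) (vdiff R d z (snd p)) = \<zero>} = S p"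
    if p: "p \<in> A \<times> A" for p
  proof -
    have x: "fst p \<in> vecs R d" and y: "snd p \<in> vecs R d" using p AV' unfolding V_def by auto
    show ?thesis unfolding S_def key_def using vdot_zero_iff[OF vdiff_in[OF x y] _ y] AV by auto
  qed
  have finS: "finite (S p)" for p unfolding S_def using finA by simp
  have T_sum: "real (card Tset) = (\<Sum>p\<in>A \<times> A. real (card (S p)))"
  proof -
    have "card Tset = (\<Sum>p\<in>A \<times> A. card {z\<in>A. vdot R d (vdiff R d (fst p) (snd p)) (vdiff R d z (snd p)) = \<zero>})"
      unfolding Tset_def using finA by (intro card_SigmaI) auto
    also have "\<dots> = (\<Sum>p\<in>A \<times> A. card (S p))" using S_eq by (intro sum.cong) auto
    finally show ?thesis by simp
  qed
  have T_le: "card Tset \<le> 3 * card A ^ 2"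
  proof -
    define f1 where "f1 = (\<lambda>(x::nat \<Rightarrow> 'a, z::nat \<Rightarrow> 'a). ((x, x), z))"
    define f2 where "f2 = (\<lambda>(x::nat \<Rightarrow> 'a, y::nat \<Rightarrow> 'a). ((x, y), y))"
    define f3 where "f3 = (\<lambda>(x::nat \<Rightarrow> 'a, y::nat \<Rightarrow> 'a). ((x, y), x))"
    have "Tset \<subseteq> f1 ` (A \<times> A) \<union> f2 ` (A \<times> A) \<union> f3 ` (A \<times> A)"
    proof
      fix t assume t: "t \<in> Tset"
      then obtain x y z where t': "t = ((x, y), z)" "x \<in> A" "y \<in> A" "z \<in> A"
        "vdot R d (vdiff R d x y) (vdiff R d z y) = \<zero>"
        unfolding Tset_def by auto
      have "\<not> right_angle R d x y z" using noRA t' by blast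
      then have "x = y \<or> y = z \<or> x = z" using t'(5) unfolding right_angle_def by blast
      then show "t \<in> f1 ` (A \<times> A) \<union> f2 ` (A \<times> A) \<union> f3 ` (A \<times> A)"
        using t' unfolding f1_def f2_def f3_def by (auto simp: image_iff)
    qed
    then have "card Tset \<le> card (f1 ` (A \<times> A) \<union> f2 ` (A \<times> A) \<union> f3 ` (A \<times> A))"
      using finA by (intro card_mono) auto
    also have "\<dots> \<le> card (f1 ` (A \<times> A)) + card (f2 ` (A \<times> A)) + card (f3 ` (A \<times> A))"
      by (meson add_le_mono card_Un_le le_trans order_refl)
    also have "\<dots> \<le> card (A \<times> A) + card (A \<times> A) + card (A \<times> A)"
      by (intro add_mono card_image_le) (use finA in auto)
    finally show ?thesis by (simp add: card_cartesian_product power2_eq_square)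
  qed
  have cnt: "real (card {z\<in>A. vdot R d v z = c}) = \<alpha> * real (card {z\<in>V. vdot R d v z = c}) + D (v, c)" for v c
  proof -
    have "D (v,c) = (\<Sum>z\<in>V. (if z \<in> A \<and> vdot R d v z = c then 1 else 0) - \<alpha> * (if vdot R d v z = c then 1 else 0))"
      unfolding D_def g_def V_def by (intro sum.cong) auto
    also have "\<dots> = (\<Sum>z\<in>V. (if z \<in> A \<and> vdot R d v z = c then 1 else 0)) - \<alpha> * (\<Sum>z\<in>V. (if vdot R d v z = c then 1 else 0))"
      by (simp add: sum_subtractf sum_distrib_left)
    also have "\<dots> = real (card {z\<in>V. z \<in> A \<and> vdot R d v z = c}) - \<alpha> * real (card {z\<in>V. vdot R d v z = c})"
      by (simp only: sum_ind[OF finV])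
    also have "{z\<in>V. z \<in> A \<and> vdot R d v z = c} = {z\<in>A. vdot R d v z = c}" using AV' by auto
    finally show ?thesis by simp
  qed
  have Kp: "real (card C) ^ (d - 1) \<le> real (card {z\<in>V. vdot R d (fst (key p)) z = snd (key p)})"
    if p: "p \<in> A \<times> A" for p
  proof -
    have x: "fst p \<in> vecs R d" and y: "snd p \<in> vecs R d" using p AV' unfolding V_def by auto
    have "card C ^ (d - 1) \<le> card {z\<in>V. vdot R d (fst (key p)) z = snd (key p)}"
      using K_lower[OF fin x y] unfolding key_def V_def C_def by simp
    then show ?thesis by (metis of_nat_le_iff of_nat_power)
  qed
  have a0: "0 \<le> \<alpha>" unfolding \<alpha>_def by simp
  have T_ge: "\<alpha> * real (card C) ^ (d - 1) * ar ^ 2 + (\<Sum>p\<in>A \<times> A. D (key p)) \<le> real (card Tset)"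
  proof -
    define SK where "SK = (\<Sum>p\<in>A \<times> A. real (card {z\<in>V. vdot R d (fst (key p)) z = snd (key p)}))"
    have "real (card Tset) = (\<Sum>p\<in>A \<times> A. \<alpha> * real (card {z\<in>V. vdot R d (fst (key p)) z = snd (key p)}) + D (key p))"
      unfolding T_sum S_def by (intro sum.cong refl) (simp add: cnt)
    also have "\<dots> = \<alpha> * SK + (\<Sum>p\<in>A \<times> A. D (key p))"
      unfolding SK_def by (simp add: sum.distrib sum_distrib_left)
    finally have h1: "real (card Tset) = \<alpha> * SK + (\<Sum>p\<in>A \<times> A. D (key p))" .
    have "SK \<ge> (\<Sum>p\<in>A \<times> A. real (card C) ^ (d - 1))"
      unfolding SK_def using Kp by (intro sum_mono) auto
    moreover have cAA: "real (card (A \<times> A)) = ar ^ 2"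
      unfolding ar_def by (simp add: card_cartesian_product power2_eq_square)
    moreover have "(\<Sum>p\<in>A \<times> A. real (card C) ^ (d - 1)) = real (card (A \<times> A)) * real (card C) ^ (d - 1)"
      by (rule sum_constant)
    ultimately have "SK \<ge> ar ^ 2 * real (card C) ^ (d - 1)" by simp
    then have h2: "\<alpha> * SK \<ge> \<alpha> * (ar ^ 2 * real (card C) ^ (d - 1))"
      using a0 by (intro mult_left_mono) auto
    have h3: "\<alpha> * real (card C) ^ (d - 1) * ar ^ 2 = \<alpha> * (ar ^ 2 * real (card C) ^ (d - 1))"
      by (simp only: ac_simps)
    show ?thesis using h1 h2 h3 by linarith
  qed
  have keyim: "key ` (A \<times> A) \<subseteq> V \<times> C"
  proof
    fix k assume "k \<in> key ` (A \<times> A)"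
    then obtain p where p: "p \<in> A \<times> A" "k = key p" by blast
    have x: "fst p \<in> vecs R d" and y: "snd p \<in> vecs R d" using p AV' unfolding V_def by auto
    show "k \<in> V \<times> C" unfolding p key_def V_def C_def using vdiff_in[OF x y] vdot_closed[OF vdiff_in[OF x y] y] by simp
  qed
  have finAA: "finite (A \<times> A)" using finA by simp
  have finVC: "finite (V \<times> C)" using finV finC by simp
  have SD: "(\<Sum>p\<in>A \<times> A. D (key p)) = (\<Sum>k\<in>V \<times> C. b k * D k)"
  proof -
    have "(\<Sum>p\<in>A \<times> A. D (key p)) = (\<Sum>k\<in>V \<times> C. \<Sum>p\<in>{p. p \<in> A \<times> A \<and> key p = k}. D (key p))"
      using sum.group[OF finAA finVC keyim, where h="\<lambda>p. D (key p)"] by simp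
    also have "\<dots> = (\<Sum>k\<in>V \<times> C. b k * D k)"
    proof (intro sum.cong refl)
      fix k
      have "(\<Sum>p\<in>{p. p \<in> A \<times> A \<and> key p = k}. D (key p)) = (\<Sum>p\<in>{p. p \<in> A \<times> A \<and> key p = k}. D k)"
        by (intro sum.cong) auto
      then show "(\<Sum>p\<in>{p. p \<in> A \<times> A \<and> key p = k}. D (key p)) = b k * D k"
        unfolding b_def by simp
    qed
    finally show ?thesis .
  qed
  have finT: "finite Tset" unfolding Tset_def using finA by auto
  have Bsum: "(\<Sum>k\<in>V \<times> C. (b k)\<^sup>2) \<le> real (card Tset)"
  proof -
    define F where "F k = {p \<in> A \<times> A. key p = k}" for k
    have finF: "finite (F k)" for k unfolding F_def using finAA by simp
    have "(\<Sum>k\<in>V \<times> C. (b k)\<^sup>2) = real (\<Sum>k\<in>V \<times> C. card (F k \<times> F k))"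
      unfolding b_def F_def by (simp add: card_cartesian_product power2_eq_square)
    also have "(\<Sum>k\<in>V \<times> C. card (F k \<times> F k)) = card (SIGMA k:V \<times> C. F k \<times> F k)"
      by (rule card_SigmaI[symmetric]) (use finVC finF in auto)
    also have "card (SIGMA k:V \<times> C. F k \<times> F k) \<le> card Tset"
    proof (rule card_inj_on_le)
      let ?h = "\<lambda>x. (fst (snd x), snd (snd (snd x)))"
      show "inj_on ?h (SIGMA k:V \<times> C. F k \<times> F k)"
      proof (rule inj_onI)
        fix x1 x2 assume x1: "x1 \<in> (SIGMA k:V \<times> C. F k \<times> F k)" and x2: "x2 \<in> (SIGMA k:V \<times> C. F k \<times> F k)"
          and e: "?h x1 = ?h x2"
        obtain k1 p1 p1' where X1: "x1 = (k1, (p1, p1'))" "p1 \<in> A \<times> A" "key p1 = k1" "p1' \<in> A \<times> A" "key p1' = k1"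
          using x1 unfolding F_def by auto
        obtain k2 p2 p2' where X2: "x2 = (k2, (p2, p2'))" "p2 \<in> A \<times> A" "key p2 = k2" "p2' \<in> A \<times> A" "key p2' = k2"
          using x2 unfolding F_def by auto
        have pp: "p1 = p2" and sp: "snd p1' = snd p2'" using e X1 X2 by auto
        have kk: "k1 = k2" using X1 X2 pp by simp
        have "vdiff R d (fst p1') (snd p1') = vdiff R d (fst p2') (snd p2')"
        proof -
          have "fst (key p1') = fst (key p2')" using X1(5) X2(5) kk by simp
          then show ?thesis unfolding key_def by (simp only: fst_conv)
        qed
        then have "fst p1' = fst p2'" using vdiff_cancel[of "fst p1'" d "fst p2'" "snd p1'"] X1(4) X2(4) AV' sp
          unfolding V_def by auto
        then have "p1' = p2'" using sp by (simp add: prod_eq_iff)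
        then show "x1 = x2" using X1(1) X2(1) pp kk by simp
      qed
      show "?h ` (SIGMA k:V \<times> C. F k \<times> F k) \<subseteq> Tset"
      proof
        fix w assume "w \<in> ?h ` (SIGMA k:V \<times> C. F k \<times> F k)"
        then obtain k p p' where X: "w = (p, snd p')" "p \<in> A \<times> A" "key p = k" "p' \<in> A \<times> A" "key p' = k"
          unfolding F_def by auto
        have x: "fst p \<in> vecs R d" and y: "snd p \<in> vecs R d" and y': "snd p' \<in> vecs R d"
          using X AV' unfolding V_def by auto
        have kp: "key p = key p'" using X by simp
        have u: "vdiff R d (fst p) (snd p) = vdiff R d (fst p') (snd p')" using kp unfolding key_def by simp
        have "vdot R d (vdiff R d (fst p) (snd p)) (snd p) = vdot R d (vdiff R d (fst p') (snd p')) (snd p')"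
          using arg_cong[OF kp, of snd] unfolding key_def by (simp only: snd_conv)
        then have "vdot R d (vdiff R d (fst p) (snd p)) (snd p') = vdot R d (vdiff R d (fst p) (snd p)) (snd p)"
          using u by simp
        then have "vdot R d (vdiff R d (fst p) (snd p)) (vdiff R d (snd p') (snd p)) = \<zero>"
          using vdot_zero_iff[OF vdiff_in[OF x y] y' y] by simp
        then show "w \<in> Tset" unfolding Tset_def using X by auto
      qed
    qed (rule finT)
    finally show ?thesis by simp
  qed
  have Dsum: "(\<Sum>k\<in>V \<times> C. (D k)\<^sup>2) \<le> qr ^ d * ar"
    using Dsum_bound[OF fin d1 AV] unfolding D_def g_def \<alpha>_def V_def C_def qr_def ar_def .
  define E where "E = (\<Sum>k\<in>V \<times> C. b k * D k)"
  have CS: "E\<^sup>2 \<le> (\<Sum>k\<in>V \<times> C. (b k)\<^sup>2) * (\<Sum>k\<in>V \<times> C. (D k)\<^sup>2)"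
    unfolding E_def by (rule CS_real)
  have n1: "0 \<le> (\<Sum>k\<in>V \<times> C. (D k)\<^sup>2)" by (intro sum_nonneg) auto
  have Tr: "real (card Tset) \<le> 3 * ar ^ 2"
  proof -
    have "real (card Tset) \<le> real (3 * card A ^ 2)" using T_le by (simp only: of_nat_le_iff)
    then show ?thesis unfolding ar_def by simp
  qed
  have E2: "E\<^sup>2 \<le> 3 * ar ^ 2 * (qr ^ d * ar)"
  proof -
    have "E\<^sup>2 \<le> real (card Tset) * (\<Sum>k\<in>V \<times> C. (D k)\<^sup>2)"
      using CS mult_right_mono[OF Bsum n1] by (rule order_trans)
    also have "\<dots> \<le> 3 * ar ^ 2 * (qr ^ d * ar)"
      using Tr Dsum n1 by (intro mult_mono) (auto simp: ar_def)
    finally show ?thesis .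
  qed
  have qpos: "qr > 0" unfolding qr_def using Cpos by simp
  have X: "\<alpha> * real (card C) ^ (d - 1) * ar ^ 2 = ar ^ 3 / qr"
  proof -
    have "qr ^ d = qr * qr ^ (d - 1)" using d1 by (cases d) auto
    then show ?thesis unfolding \<alpha>_def qr_def ar_def C_def using qpos[unfolded qr_def C_def]
      by (simp add: field_simps power2_eq_square power3_eq_cube)
  qed
  have TE: "ar ^ 3 / qr + E \<le> real (card Tset)" using T_ge SD X unfolding E_def by simp
  show ?thesis
  proof (cases "real (card A) ^ 3 / real (card (carrier R)) - 3 * real (card A) ^ 2 \<le> 0")
    case True then show ?thesis by simp
  next
    case False
    then have pos: "0 < ar ^ 3 / qr - 3 * ar ^ 2" unfolding ar_def qr_def C_def by simp
    have "ar ^ 3 / qr - 3 * ar ^ 2 \<le> - E" using TE Tr by linarith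
    then have "(ar ^ 3 / qr - 3 * ar ^ 2)\<^sup>2 \<le> (- E)\<^sup>2"
      using pos by (intro power_mono) auto
    also have "\<dots> \<le> 3 * ar ^ 3 * qr ^ d" using E2 by (simp add: power2_eq_square power3_eq_cube algebra_simps)
    finally have "(real (card A) ^ 3 / real (card (carrier R)) - 3 * real (card A) ^ 2)\<^sup>2
            \<le> 3 * real (card A) ^ 3 * real (card (carrier R)) ^ d" unfolding ar_def qr_def C_def .
    then show ?thesis by (rule disjI2)
  qed
qed

lemma final_arith:
  fixes a q :: real and d :: nat
  assumes q1: "1 \<le> q" and d1: "1 \<le> d"
    and ha: "7 * q powr ((real d + 2) / 3) \<le> a"
    and h: "a ^ 3 / q - 3 * a ^ 2 \<le> 0 \<or> (a ^ 3 / q - 3 * a ^ 2)\<^sup>2 \<le> 3 * a ^ 3 * q ^ d"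
  shows False
proof -
  have qpos: "0 < q" using q1 by simp
  let ?e = "(real d + 2) / 3"
  have pe: "q \<le> q powr ?e"
  proof -
    have "q powr 1 \<le> q powr ?e" using d1 q1 by (intro powr_mono) auto
    then show ?thesis using qpos by simp
  qed
  have a7: "7 * q \<le> a" using pe ha by linarith
  have apos: "0 < a" using a7 qpos by linarith
  have cube: "(q powr ?e) ^ 3 = q ^ (d + 2)"
  proof -
    have "(q powr ?e) ^ 3 = q powr ?e * q powr ?e * q powr ?e" by (simp only: power3_eq_cube)
    also have "\<dots> = q powr (?e + ?e + ?e)" by (simp only: powr_add)
    finally have "(q powr ?e) ^ 3 = q powr (?e + ?e + ?e)" .
    also have "?e + ?e + ?e = real (d + 2)" by (simp add: field_simps)
    finally show ?thesis using powr_realpow[OF qpos, of "d + 2"] by simp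
  qed
  have a3: "343 * q ^ (d + 2) \<le> a ^ 3"
  proof -
    have "(7 * q powr ?e) ^ 3 \<le> a ^ 3" using ha by (intro power_mono) auto
    then show ?thesis using cube by (simp add: power_mult_distrib)
  qed
  show False
  proof (cases "a ^ 3 / q - 3 * a ^ 2 \<le> 0")
    case True
    then have "a ^ 3 \<le> 3 * a ^ 2 * q" using qpos by (simp add: field_simps)
    then have "a * a ^ 2 \<le> (3 * q) * a ^ 2" by (simp add: power3_eq_cube power2_eq_square algebra_simps)
    then have "a \<le> 3 * q" using apos by simp
    then show False using a7 qpos by linarith
  next
    case False
    then have h2: "(a ^ 3 / q - 3 * a ^ 2)\<^sup>2 \<le> 3 * a ^ 3 * q ^ d" using h by simp
    have e1: "a ^ 3 / q - 3 * a ^ 2 = a ^ 2 * (a - 3 * q) / q" using qpos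
      by (simp add: field_simps power2_eq_square power3_eq_cube)
    have "4 / 7 * a \<le> a - 3 * q" using a7 by linarith
    then have "a ^ 2 * (4 / 7 * a) / q \<le> a ^ 2 * (a - 3 * q) / q"
      using qpos by (intro divide_right_mono mult_left_mono) auto
    then have "4 / 7 * a ^ 3 / q \<le> a ^ 3 / q - 3 * a ^ 2"
      using e1 by (simp add: power2_eq_square power3_eq_cube)
    moreover have "0 \<le> 4 / 7 * a ^ 3 / q" using apos qpos by simp
    ultimately have "(4 / 7 * a ^ 3 / q)\<^sup>2 \<le> (a ^ 3 / q - 3 * a ^ 2)\<^sup>2"
      by (intro power_mono) auto
    with h2 have h3: "(4 / 7 * a ^ 3 / q)\<^sup>2 \<le> 3 * a ^ 3 * q ^ d" by linarith
    have e2: "(4 / 7 * a ^ 3 / q)\<^sup>2 = 16 / 49 * (a ^ 3 * a ^ 3) / q ^ 2"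
      by (simp add: power2_eq_square)
    have "16 / 49 * (a ^ 3 * (343 * q ^ (d + 2))) / q ^ 2 \<le> 16 / 49 * (a ^ 3 * a ^ 3) / q ^ 2"
      using a3 apos qpos by (intro divide_right_mono mult_left_mono) auto
    moreover have "16 / 49 * (a ^ 3 * (343 * q ^ (d + 2))) / q ^ 2 = 112 * (a ^ 3 * q ^ d)"
      using qpos by (simp add: power_add power2_eq_square)
    ultimately have "112 * (a ^ 3 * q ^ d) \<le> 3 * (a ^ 3 * q ^ d)" using h3 e2 by linarith
    moreover have "0 < a ^ 3 * q ^ d" using apos qpos by simp
    ultimately show False by linarith
  qed
qed

theorem corollary2p3:
  shows "\<exists>C::real. C > 0 \<and>
    (\<forall>(R :: nat ring) (d :: nat) (A :: (nat \<Rightarrow> nat) set).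
       field R \<and> finite (carrier R) \<and>
       (\<exists>p k. prime (p::nat) \<and> odd p \<and> k \<ge> 1 \<and> card (carrier R) = p ^ k) \<and>
       d \<ge> 2 \<and> A \<subseteq> vecs R d \<and>
       real (card A) \<ge> C * real (card (carrier R)) powr ((real d + 2) / 3)
       \<longrightarrow> (\<exists>x\<in>A. \<exists>y\<in>A. \<exists>z\<in>A. right_angle R d x y z))"
proof (rule exI[of _ 7], intro conjI allI impI)
  fix R :: "nat ring" and d :: nat and A :: "(nat \<Rightarrow> nat) set"
  assume H: "field R \<and> finite (carrier R) \<and>
       (\<exists>p k. prime (p::nat) \<and> odd p \<and> k \<ge> 1 \<and> card (carrier R) = p ^ k) \<and>
       d \<ge> 2 \<and> A \<subseteq> vecs R d \<and>
       real (card A) \<ge> 7 * real (card (carrier R)) powr ((real d + 2) / 3)"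
  then have fR: "field R" and fin: "finite (carrier R)" and d2: "d \<ge> 2" and AV: "A \<subseteq> vecs R d"
    and ha: "real (card A) \<ge> 7 * real (card (carrier R)) powr ((real d + 2) / 3)" by auto
  interpret field R by (rule fR)
  show "\<exists>x\<in>A. \<exists>y\<in>A. \<exists>z\<in>A. right_angle R d x y z"
  proof (rule ccontr)
    assume "\<not> ?thesis"
    then have noRA: "\<forall>x\<in>A. \<forall>y\<in>A. \<forall>z\<in>A. \<not> right_angle R d x y z" by blast
    have d1: "1 \<le> d" using d2 by simp
    have "card (carrier R) > 0" using fin by (auto simp: card_gt_0_iff)
    then have q1: "1 \<le> real (card (carrier R))" by simp
    show False using final_arith[OF q1 d1 ha main_ineq[OF fin d1 AV noRA]] .
  qed
qed (simp)

end
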